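(* Let ${\mathscr X}$ be a Hausdorff space, ${\mathscr A}$ a set of finite Borel partitions of ${\mathscr X}$ directed under refinement, and equip $M^1({\mathscr X})$ with the weak topology (assumed Hausdorff, with $P\mapsto P(A)$ Borel measurable for all Borel $A$). Let $\Pi$ be a Radon probability measure on $M^1({\mathscr X})$ (weak topology) with mean measure $G$. Then for every $\delta,\epsilon>0$ there exist $\alpha\in{\mathscr A}$ and $\eta>0$ such that for every Borel set $B$ with $\inf\{G(B\triangle C):C\in\sigma(\alpha)\}<\eta$, $$\Pi\Bigl(\bigl\{P\in M^1({\mathscr X}):\inf\{P(B\triangle C):C\in\sigma(\alpha)\}>\delta\bigr\}\Bigr)<\epsilon.$$
   Context: The weak topology on $M^1({\mathscr X})$ (Radon probability measures) is the coarsest topology making $P\mapsto\int h\,dP$ continuous for all bounded Borel $h$. Mean measure: $G(A)=\int P(A)\,d\Pi(P)$. $B\triangle C=(B\setminus C)\cup(C\setminus B)$; $\sigma(\alpha)$ is the $\sigma$-algebra generated by the partition $\alpha$. *)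

theory Defs
  imports "HOL-Probability.Probability"
begin

definition borel_of :: "'a topology \<Rightarrow> 'a measure" where
  "borel_of T = sigma (topspace T) {U. openin T U}"

definition radon_prob_on :: "'a topology \<Rightarrow> 'a measure \<Rightarrow> bool" where
  "radon_prob_on T M \<longleftrightarrow> prob_space M \<and> space M = topspace T \<and> sets M = sets (borel_of T) \<and>
     (\<forall>A\<in>sets M. emeasure M A = (SUP K\<in>{K. compactin T K \<and> K \<subseteq> A}. emeasure M K))"

definition M1 :: "('a::topological_space) measure set" where
  "M1 = {P. radon_prob_on euclidean P \<and> sets P = sets borel}"

definition weak_top :: "('a::topological_space) measure topology" where
  "weak_top = topology_generated_by
     {{P \<in> M1. (\<integral>x. h x \<partial>P) \<in> U} | h U.
        h \<in> borel_measurable (borel :: 'a measure) \<and> bounded (range h) \<and> open (U :: real set)}"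

definition mean_measure :: "'a measure measure \<Rightarrow> 'a set \<Rightarrow> real" where
  "mean_measure Pm A = (\<integral>P. measure P A \<partial>Pm)"

definition finite_borel_partition :: "('a::topological_space) set set \<Rightarrow> bool" where
  "finite_borel_partition \<alpha> \<longleftrightarrow> finite \<alpha> \<and> \<alpha> \<subseteq> sets borel \<and> {} \<notin> \<alpha> \<and>
     disjoint \<alpha> \<and> \<Union>\<alpha> = UNIV"

definition refines :: "'a set set \<Rightarrow> 'a set set \<Rightarrow> bool" where
  "refines \<gamma> \<alpha> \<longleftrightarrow> (\<forall>C\<in>\<gamma>. \<exists>A\<in>\<alpha>. C \<subseteq> A)"

definition directed_by_refinement :: "'a set set set \<Rightarrow> bool" where
  "directed_by_refinement \<AA> \<longleftrightarrow> \<AA> \<noteq> {} \<and>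
     (\<forall>\<alpha>\<in>\<AA>. \<forall>\<beta>\<in>\<AA>. \<exists>\<gamma>\<in>\<AA>. refines \<gamma> \<alpha> \<and> refines \<gamma> \<beta>)"

end

theory Submission
  imports Defs
begin

theorem mainTheorem5:
  fixes \<AA> :: "('a::t2_space) set set set"
    and Pm :: "'a measure measure"
    and \<delta> \<epsilon> :: real
  assumes parts: "\<forall>\<alpha>\<in>\<AA>. finite_borel_partition \<alpha>"
    and directed: "directed_by_refinement \<AA>"
    and haus: "Hausdorff_space (weak_top :: 'a measure topology)"
    and meas: "\<forall>A\<in>sets (borel :: 'a measure).
                 (\<lambda>P. measure P A) \<in> borel_measurable (borel_of (weak_top :: 'a measure topology))"
    and radon: "radon_prob_on weak_top Pm"
    and "\<delta> > 0" and "\<epsilon> > 0"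
  shows "\<exists>\<alpha>\<in>\<AA>. \<exists>\<eta>>0. \<forall>B\<in>sets (borel :: 'a measure).
           (INF C\<in>sigma_sets UNIV \<alpha>. mean_measure Pm (B - C \<union> (C - B))) < \<eta> \<longrightarrow>
           measure Pm {P \<in> M1. (INF C\<in>sigma_sets UNIV \<alpha>. measure P (B - C \<union> (C - B))) > \<delta>} < \<epsilon>"
proof -
  from directed obtain \<alpha> where a: "\<alpha> \<in> \<AA>" unfolding directed_by_refinement_def by blast
  have ps: "prob_space Pm" and sp: "space Pm = topspace weak_top"
    and ss: "sets Pm = sets (borel_of weak_top)"
    using radon unfolding radon_prob_on_def by auto
  interpret Pm: prob_space Pm by (rule ps)
  have topM1: "topspace (weak_top :: 'a measure topology) \<subseteq> M1"
    unfolding weak_top_def topology_generated_by_topspace by blast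
  have abss: "\<alpha> \<subseteq> sets borel" using parts a unfolding finite_borel_partition_def by auto
  have sig: "C \<in> sets borel" if "C \<in> sigma_sets UNIV \<alpha>" for C :: "'a set"
  proof -
    have "sigma_sets UNIV \<alpha> \<subseteq> sets borel"
      using abss by (metis sets.sigma_sets_subset space_borel)
    thus ?thesis using that by blast
  qed
  have M1prob: "prob_space P" if "P \<in> M1" for P :: "'a measure"
    using that unfolding M1_def radon_prob_on_def by auto
  show ?thesis
  proof (intro bexI[OF _ a] exI[of _ "\<epsilon> * \<delta>"] conjI ballI impI)
    show "\<epsilon> * \<delta> > 0" using assms by simp
    fix B :: "'a set" assume B: "B \<in> sets borel"
    assume lt: "(INF C\<in>sigma_sets UNIV \<alpha>. mean_measure Pm (B - C \<union> (C - B))) < \<epsilon> * \<delta>"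
    have ne: "sigma_sets UNIV \<alpha> \<noteq> {}" using sigma_sets.Empty by blast
    obtain C0 where C0: "C0 \<in> sigma_sets UNIV \<alpha>"
      and C0lt: "mean_measure Pm (B - C0 \<union> (C0 - B)) < \<epsilon> * \<delta>"
      using cInf_lessD[OF _ lt] ne by auto
    define D where "D = B - C0 \<union> (C0 - B)"
    have D: "D \<in> sets borel" unfolding D_def using B sig[OF C0] by auto
    define f where "f = (\<lambda>P::'a measure. measure P D)"
    have fm: "f \<in> borel_measurable Pm"
      unfolding f_def using meas D measurable_cong_sets[OF ss refl] by blast
    have fb: "f P \<le> 1" if "P \<in> space Pm" for P
    proof -
      have "prob_space P" using M1prob topM1 sp that by blast
      then show ?thesis unfolding f_def by (simp add: prob_space.prob_le_1)
    qed
    have fint: "integrable Pm f"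
      by (rule Pm.integrable_const_bound[where B=1]) (use fb fm in \<open>auto simp: f_def\<close>)
    have mk: "measure Pm {P\<in>space Pm. f P \<ge> \<delta>} \<le> (\<integral>P. f P \<partial>Pm) / \<delta>"
      by (rule integral_Markov_inequality_measure[OF fint, of "space Pm"])
         (use assms in \<open>auto simp: f_def\<close>)
    have "(\<integral>P. f P \<partial>Pm) / \<delta> < \<epsilon>"
      using C0lt assms unfolding mean_measure_def f_def D_def by (simp add: pos_divide_less_eq)
    with mk have T: "measure Pm {P\<in>space Pm. f P \<ge> \<delta>} < \<epsilon>" by linarith
    let ?S = "{P \<in> M1. (INF C\<in>sigma_sets UNIV \<alpha>. measure P (B - C \<union> (C - B))) > \<delta>}"
    show "measure Pm ?S < \<epsilon>"
    proof (cases "?S \<in> sets Pm")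
      case False then show ?thesis using assms by (simp add: measure_notin_sets)
    next
      case True
      have sub: "?S \<subseteq> {P\<in>space Pm. f P \<ge> \<delta>}"
      proof
        fix P assume P: "P \<in> ?S"
        have "(INF C\<in>sigma_sets UNIV \<alpha>. measure P (B - C \<union> (C - B))) \<le> measure P (B - C0 \<union> (C0 - B))"
          by (rule cInf_lower) (use C0 in \<open>auto intro: bdd_belowI2[where m=0]\<close>)
        then have "f P \<ge> \<delta>" using P unfolding f_def D_def by auto
        moreover have "P \<in> space Pm" using True P sets.sets_into_space by blast
        ultimately show "P \<in> {P\<in>space Pm. f P \<ge> \<delta>}" by auto
      qed
      have "{P\<in>space Pm. f P \<ge> \<delta>} \<in> sets Pm" using fm by measurable
      then have "measure Pm ?S \<le> measure Pm {P\<in>space Pm. f P \<ge> \<delta>}"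
        using sub by (intro Pm.finite_measure_mono) auto
      with T show ?thesis by linarith
    qed
  qed
qed

end
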